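(* Assume the exploration assumption in the context and let $\Pi=\{\pi:\min_{s,a}\pi(a\mid s)>0\}$. Then: (1) For any $\pi\in\Pi$, $\bar F(Q,\pi)=[(I-D_\pi)+D_\pi\mathcal H](Q)$ for all $Q\in\mathbb R^{|\mathcal S||\mathcal A|}$, where $D_\pi=\mathrm{diag}(\bar\mu_\pi)$. (2) For any $Q_1,Q_2$ and $\pi\in\Pi$: $\|\bar F(Q_1,\pi)-\bar F(Q_2,\pi)\|_\infty\le\gamma_\pi\|Q_1-Q_2\|_\infty$ and $\|\bar F(Q_1,\pi)\|_\infty\le\|Q_1\|_\infty+1$, where $\gamma_\pi=1-D_{\pi,\min}(1-\gamma)$ and $D_{\pi,\min}=\min_{s,a}\bar\mu_\pi(s,a)>0$. (3) For any $\pi\in\Pi$, the equation $\bar F(Q,\pi)=Q$ has the unique solution $Q=Q^*$. (4) For any $Q_1,Q_2$ with $\|Q_1\|_\infty,\|Q_2\|_\infty\le1/(1-\gamma)$ and $\pi_1,\pi_2\in\Pi$: $\|\bar F(Q_1,\pi_1)-\bar F(Q_2,\pi_2)\|_\infty\le3\|Q_1-Q_2\|_\infty+\frac{2}{1-\gamma}\|\bar\mu_{\pi_1}-\bar\mu_{\pi_2}\|_\infty$.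
   Context: Finite MDP: states $\mathcal S$, actions $\mathcal A$, kernel $p(s'\mid s,a)$, reward $\mathcal R$ with $|\mathcal R(s,a)|\le1$, discount $\gamma\in(0,1)$. $[\mathcal H(Q)](s,a)=\mathcal R(s,a)+\gamma\sum_{s'}p(s'\mid s,a)\max_{a'}Q(s',a')$; $Q^*$ its unique fixed point (optimal Q-function). Exploration assumption: there is a policy $\pi_b$ with $\pi_b(a\mid s)>0$ for all $(s,a)$ whose state chain $P_{\pi_b}(s,s')=\sum_ap(s'\mid s,a)\pi_b(a\mid s)$ is irreducible. For $\pi\in\Pi$, the state chain $P_\pi$ is then irreducible with unique stationary distribution $\mu_\pi$, and $\bar\mu_\pi(s,a)=\mu_\pi(s)\pi(a\mid s)$ is the stationary distribution of the state-action chain $\bar P_\pi((s,a),(s',a'))=p(s'\mid s,a)\pi(a'\mid s')$. For $Q\in\mathbb R^{|\mathcal S||\mathcal A|}$ and $y=(s_0,a_0)\in\mathcal S\times\mathcal A$: $[F(Q,y)](s,a)=\mathbb 1_{\{(s_0,a_0)=(s,a)\}}(\mathcal R(s,a)+\gamma\sum_{s'}p(s'\mid s,a)\max_{a'}Q(s',a')-Q(s,a))+Q(s,a)$, and $\bar F(Q,\pi)=\mathbb E_{Y\sim\bar\mu_\pi}[F(Q,Y)]$. $\|\cdot\|_\infty$ is the max norm. *)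

theory Defs
  imports Complex_Main
begin

(* Finite MDP: states 's::finite, actions 'a::finite.
   Kernel p s a s' = p(s'|s,a); reward R s a; policies pi s a = pi(a|s);
   Q-functions are maps ('s \<times> 'a) \<Rightarrow> real. *)

definition is_kernel :: "('s::finite \<Rightarrow> 'a::finite \<Rightarrow> 's \<Rightarrow> real) \<Rightarrow> bool" where
  "is_kernel p \<longleftrightarrow> (\<forall>s a s'. 0 \<le> p s a s') \<and> (\<forall>s a. (\<Sum>s'\<in>UNIV. p s a s') = 1)"

definition is_policy :: "('s::finite \<Rightarrow> 'a::finite \<Rightarrow> real) \<Rightarrow> bool" where
  "is_policy \<pi> \<longleftrightarrow> (\<forall>s a. 0 \<le> \<pi> s a) \<and> (\<forall>s. (\<Sum>a\<in>UNIV. \<pi> s a) = 1)"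

definition PiSet :: "('s::finite \<Rightarrow> 'a::finite \<Rightarrow> real) set" where
  "PiSet = {\<pi>. is_policy \<pi> \<and> (\<forall>s a. 0 < \<pi> s a)}"

definition Ppi :: "('s::finite \<Rightarrow> 'a::finite \<Rightarrow> 's \<Rightarrow> real) \<Rightarrow> ('s \<Rightarrow> 'a \<Rightarrow> real) \<Rightarrow> 's \<Rightarrow> 's \<Rightarrow> real" where
  "Ppi p \<pi> s s' = (\<Sum>a\<in>UNIV. p s a s' * \<pi> s a)"

definition irreducible :: "('s \<Rightarrow> 's \<Rightarrow> real) \<Rightarrow> bool" where
  "irreducible P \<longleftrightarrow> (\<forall>s s'. (s, s') \<in> {(x, y). 0 < P x y}\<^sup>*)"

definition stationary :: "('s::finite \<Rightarrow> 's \<Rightarrow> real) \<Rightarrow> ('s \<Rightarrow> real) \<Rightarrow> bool" where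
  "stationary P \<mu> \<longleftrightarrow> (\<forall>s. 0 \<le> \<mu> s) \<and> (\<Sum>s\<in>UNIV. \<mu> s) = 1 \<and>
      (\<forall>s'. \<mu> s' = (\<Sum>s\<in>UNIV. \<mu> s * P s s'))"

definition mu :: "('s::finite \<Rightarrow> 'a::finite \<Rightarrow> 's \<Rightarrow> real) \<Rightarrow> ('s \<Rightarrow> 'a \<Rightarrow> real) \<Rightarrow> 's \<Rightarrow> real" where
  "mu p \<pi> = (THE \<mu>. stationary (Ppi p \<pi>) \<mu>)"

definition mubar :: "('s::finite \<Rightarrow> 'a::finite \<Rightarrow> 's \<Rightarrow> real) \<Rightarrow> ('s \<Rightarrow> 'a \<Rightarrow> real) \<Rightarrow> 's \<times> 'a \<Rightarrow> real" where
  "mubar p \<pi> = (\<lambda>(s, a). mu p \<pi> s * \<pi> s a)"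

definition supnorm :: "('x::finite \<Rightarrow> real) \<Rightarrow> real" where
  "supnorm f = (MAX x\<in>UNIV. \<bar>f x\<bar>)"

definition Hop :: "('s::finite \<Rightarrow> 'a::finite \<Rightarrow> 's \<Rightarrow> real) \<Rightarrow> ('s \<Rightarrow> 'a \<Rightarrow> real) \<Rightarrow> real
      \<Rightarrow> ('s \<times> 'a \<Rightarrow> real) \<Rightarrow> 's \<times> 'a \<Rightarrow> real" where
  "Hop p R \<gamma> Q = (\<lambda>(s, a). R s a + \<gamma> * (\<Sum>s'\<in>UNIV. p s a s' * (MAX a'\<in>UNIV. Q (s', a'))))"

definition Qstar :: "('s::finite \<Rightarrow> 'a::finite \<Rightarrow> 's \<Rightarrow> real) \<Rightarrow> ('s \<Rightarrow> 'a \<Rightarrow> real) \<Rightarrow> real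
      \<Rightarrow> 's \<times> 'a \<Rightarrow> real" where
  "Qstar p R \<gamma> = (THE Q. Hop p R \<gamma> Q = Q)"

definition Fop :: "('s::finite \<Rightarrow> 'a::finite \<Rightarrow> 's \<Rightarrow> real) \<Rightarrow> ('s \<Rightarrow> 'a \<Rightarrow> real) \<Rightarrow> real
      \<Rightarrow> ('s \<times> 'a \<Rightarrow> real) \<Rightarrow> 's \<times> 'a \<Rightarrow> 's \<times> 'a \<Rightarrow> real" where
  "Fop p R \<gamma> Q y = (\<lambda>(s, a).
      (if y = (s, a) then 1 else 0) *
        (R s a + \<gamma> * (\<Sum>s'\<in>UNIV. p s a s' * (MAX a'\<in>UNIV. Q (s', a'))) - Q (s, a))
      + Q (s, a))"

definition Fbar :: "('s::finite \<Rightarrow> 'a::finite \<Rightarrow> 's \<Rightarrow> real) \<Rightarrow> ('s \<Rightarrow> 'a \<Rightarrow> real) \<Rightarrow> real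
      \<Rightarrow> ('s \<times> 'a \<Rightarrow> real) \<Rightarrow> ('s \<Rightarrow> 'a \<Rightarrow> real) \<Rightarrow> 's \<times> 'a \<Rightarrow> real" where
  "Fbar p R \<gamma> Q \<pi> = (\<lambda>x. \<Sum>y\<in>UNIV. mubar p \<pi> y * Fop p R \<gamma> Q y x)"

end

theory Submission imports "HOL-Analysis.Analysis" Defs begin

lemma stat_exists:
  fixes P :: "'s::finite \<Rightarrow> 's \<Rightarrow> real"
  assumes nn: "\<And>s s'. 0 \<le> P s s'" and rs: "\<And>s. (\<Sum>s'\<in>UNIV. P s s') = 1"
  shows "\<exists>\<mu>. stationary P \<mu>"
proof -
  define S where "S = {v::real^'s. (\<forall>i. 0 \<le> v$i) \<and> (\<Sum>i\<in>UNIV. v$i) = 1}"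
  define f where "f = (\<lambda>v::real^'s. \<chi> j. \<Sum>i\<in>UNIV. v$i * P i j)"
  have cl: "closed S"
    unfolding S_def
    by (intro closed_Collect_conj closed_Collect_all closed_Collect_le closed_Collect_eq
        continuous_intros)
  have bd: "bounded S"
    unfolding bounded_iff
  proof (intro exI ballI)
    fix x assume "x \<in> S"
    then have "(\<Sum>i\<in>UNIV. \<bar>x$i\<bar>) = 1" by (simp add: S_def)
    then show "norm x \<le> 1" using norm_le_l1_cart[of x] by simp
  qed
  have cv: "convex S"
    unfolding convex_def S_def
    by (auto simp: sum.distrib sum_distrib_left[symmetric])
  have ne: "S \<noteq> {}"
  proof -
    obtain i0 :: 's where True by simp
    have "(\<chi> i. if i = i0 then (1::real) else 0) \<in> S" by (simp add: S_def)
    then show ?thesis by blast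
  qed
  have ct: "continuous_on S f" unfolding f_def by (intro continuous_intros)
  have fim: "f \<in> S \<rightarrow> S"
  proof
    fix v assume v: "v \<in> S"
    have "(\<Sum>j\<in>UNIV. \<Sum>i\<in>UNIV. v$i * P i j) = (\<Sum>i\<in>UNIV. v$i * (\<Sum>j\<in>UNIV. P i j))"
      by (subst sum.swap) (simp add: sum_distrib_left)
    also have "\<dots> = 1" using v by (simp add: rs S_def)
    finally show "f v \<in> S" using v nn by (auto simp: S_def f_def intro!: sum_nonneg)
  qed
  obtain x where "x \<in> S" "f x = x"
    using brouwer[OF compact_eq_bounded_closed[THEN iffD2, OF conjI[OF bd cl]] cv ne ct fim] by blast
  then have "stationary P (\<lambda>i. x$i)"
    unfolding stationary_def S_def f_def
    by (auto simp: vec_eq_iff)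
  then show ?thesis by blast
qed


lemma stat_prop:
  fixes P :: "'s::finite \<Rightarrow> 's \<Rightarrow> real"
  assumes nn: "\<And>s s'. 0 \<le> P s s'" and wn: "\<And>s. 0 \<le> w s"
    and ws: "\<And>s'. w s' = (\<Sum>s\<in>UNIV. w s * P s s')"
    and path: "(x, y) \<in> {(x, y). 0 < P x y}\<^sup>*" and wx: "0 < w x"
  shows "0 < w y"
  using path
proof (induction rule: rtrancl_induct)
  case base then show ?case using wx .
next
  case (step y z)
  have "0 < w y * P y z" using step by simp
  also have "\<dots> \<le> (\<Sum>s\<in>UNIV. w s * P s z)"
    by (rule member_le_sum) (auto simp: wn nn)
  finally show ?case using ws[of z] by simp
qed

lemma stat_nn: "stationary P \<mu> \<Longrightarrow> 0 \<le> \<mu> s"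
  unfolding stationary_def by blast
lemma stat_sum: "stationary P \<mu> \<Longrightarrow> (\<Sum>s\<in>UNIV. \<mu> s) = 1"
  unfolding stationary_def by blast
lemma stat_eq: "stationary P \<mu> \<Longrightarrow> \<mu> s' = (\<Sum>s\<in>UNIV. \<mu> s * P s s')"
  unfolding stationary_def by blast

lemma stat_pos:
  fixes P :: "'s::finite \<Rightarrow> 's \<Rightarrow> real" and \<mu> \<nu> :: "'s \<Rightarrow> real"
  assumes nn: "\<And>s s'. 0 \<le> P s s'" and irr: "irreducible P" and st: "stationary P \<mu>"
  shows "0 < \<mu> s"
proof -
  from st have "(\<Sum>s\<in>UNIV. \<mu> s) = 1" by (rule stat_sum)
  then obtain s0 where "\<mu> s0 \<noteq> 0" by (metis (mono_tags, lifting) sum.neutral zero_neq_one)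
  then have "0 < \<mu> s0" using stat_nn[OF st, of s0] by (simp add: order_less_le)
  then show ?thesis using stat_prop[of P \<mu> s0 s] nn stat_nn[OF st] stat_eq[OF st] irr
    unfolding irreducible_def by blast
qed

lemma stat_unique:
  fixes P :: "'s::finite \<Rightarrow> 's \<Rightarrow> real" and \<mu> \<nu> :: "'s \<Rightarrow> real"
  assumes nn: "\<And>s s'. 0 \<le> P s s'" and irr: "irreducible P"
    and st1: "stationary P \<mu>" and st2: "stationary P \<nu>"
  shows "\<nu> = \<mu>"
proof -
  have mp: "\<And>s. 0 < \<mu> s" using stat_pos[OF nn irr st1] .
  define c where "c = (MIN s\<in>UNIV. \<nu> s / \<mu> s)"
  obtain s0 where s0: "c = \<nu> s0 / \<mu> s0"
  proof -
    have "c \<in> (\<lambda>s. \<nu> s / \<mu> s) ` UNIV" unfolding c_def by (rule Min_in) auto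
    then show ?thesis using that by blast
  qed
  define w where "w = (\<lambda>s. \<nu> s - c * \<mu> s)"
  have cle: "c \<le> \<nu> s / \<mu> s" for s unfolding c_def by (rule Min_le) auto
  have wn: "0 \<le> w s" for s
    using cle[of s] mp[of s] unfolding w_def by (simp add: pos_le_divide_eq)
  have w0: "w s0 = 0" using s0 mp[of s0] unfolding w_def by simp
  have ws: "w s' = (\<Sum>s\<in>UNIV. w s * P s s')" for s'
  proof -
    have "w s' = (\<Sum>s\<in>UNIV. \<nu> s * P s s') - c * (\<Sum>s\<in>UNIV. \<mu> s * P s s')"
      unfolding w_def using stat_eq[OF st1, of s'] stat_eq[OF st2, of s'] by simp
    also have "\<dots> = (\<Sum>s\<in>UNIV. w s * P s s')"
      unfolding w_def sum_distrib_left left_diff_distrib sum_subtractf by (simp add: mult.assoc)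
    finally show ?thesis .
  qed
  have wz: "w s = 0" for s
  proof (rule ccontr)
    assume "w s \<noteq> 0"
    then have "0 < w s" using wn[of s] by simp
    moreover have "(s, s0) \<in> {(x, y). 0 < P x y}\<^sup>*" using irr unfolding irreducible_def by blast
    ultimately have "0 < w s0" using stat_prop[of P w s s0] nn wn ws by blast
    then show False using w0 by simp
  qed
  then have nv: "\<nu> s = c * \<mu> s" for s by (simp add: w_def algebra_simps)
  have "1 = (\<Sum>s\<in>UNIV. \<nu> s)" using stat_sum[OF st2] by simp
  also have "\<dots> = c * (\<Sum>s\<in>UNIV. \<mu> s)" by (simp add: nv sum_distrib_left)
  also have "\<dots> = c" using stat_sum[OF st1] by simp
  finally show ?thesis using nv by auto
qed


lemma sup_ge: "\<bar>f x\<bar> \<le> supnorm f"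
  unfolding supnorm_def by (rule Max_ge) auto

lemma sup_le: "(\<And>x. \<bar>f x\<bar> \<le> c) \<Longrightarrow> supnorm f \<le> c"
  unfolding supnorm_def by (subst Max_le_iff) auto

lemma sup_nn: "0 \<le> supnorm f"
  using sup_ge[of f] abs_ge_zero order_trans by blast

lemma sup_le_sum: "supnorm f \<le> (\<Sum>x\<in>UNIV. \<bar>f x\<bar>)"
  by (rule sup_le, rule member_le_sum) auto

lemma max_diff:
  fixes f g :: "'b::finite \<Rightarrow> real"
  assumes "\<And>a. \<bar>f a - g a\<bar> \<le> c"
  shows "\<bar>(MAX a\<in>UNIV. f a) - (MAX a\<in>UNIV. g a)\<bar> \<le> c"
proof -
  have A: "(MAX a\<in>UNIV. f a) \<le> (MAX a\<in>UNIV. g a) + c" if h: "\<And>a. \<bar>f a - g a\<bar> \<le> c"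
    for f g :: "'b \<Rightarrow> real"
  proof -
    obtain a0 where a0: "(MAX a\<in>UNIV. f a) = f a0"
    proof -
      have "(MAX a\<in>UNIV. f a) \<in> f ` UNIV" by (rule Max_in) auto
      then show ?thesis using that by blast
    qed
    have "g a0 \<le> (MAX a\<in>UNIV. g a)" by (rule Max_ge) auto
    then show ?thesis using a0 h[of a0] by linarith
  qed
  have "(MAX a\<in>UNIV. f a) \<le> (MAX a\<in>UNIV. g a) + c" by (rule A) (rule assms)
  moreover have "(MAX a\<in>UNIV. g a) \<le> (MAX a\<in>UNIV. f a) + c"
    by (rule A) (metis abs_minus_commute assms)
  ultimately show ?thesis by linarith
qed

lemma Hop_lip:
  assumes kernel: "is_kernel p" and g: "0 \<le> \<gamma>"
  shows "\<bar>Hop p R \<gamma> Q1 x - Hop p R \<gamma> Q2 x\<bar> \<le> \<gamma> * supnorm (\<lambda>x. Q1 x - Q2 x)"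
proof -
  obtain s a where x: "x = (s, a)" by fastforce
  let ?d = "supnorm (\<lambda>x. Q1 x - Q2 x)"
  let ?M1 = "\<lambda>s'. (MAX a'\<in>UNIV. Q1 (s', a'))"
  let ?M2 = "\<lambda>s'. (MAX a'\<in>UNIV. Q2 (s', a'))"
  have md: "\<bar>?M1 s' - ?M2 s'\<bar> \<le> ?d" for s'
    by (rule max_diff) (rule sup_ge[where f = "\<lambda>x. Q1 x - Q2 x", of "(s', _)", simplified])
  have "\<bar>(\<Sum>s'\<in>UNIV. p s a s' * ?M1 s') - (\<Sum>s'\<in>UNIV. p s a s' * ?M2 s')\<bar>
      = \<bar>\<Sum>s'\<in>UNIV. p s a s' * (?M1 s' - ?M2 s')\<bar>"
    by (simp add: sum_subtractf right_diff_distrib)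
  also have "\<dots> \<le> (\<Sum>s'\<in>UNIV. \<bar>p s a s' * (?M1 s' - ?M2 s')\<bar>)" by (rule sum_abs)
  also have "\<dots> \<le> (\<Sum>s'\<in>UNIV. p s a s' * ?d)"
  proof (rule sum_mono)
    fix s' :: 'a
    have "0 \<le> p s a s'" using kernel by (simp add: is_kernel_def)
    then show "\<bar>p s a s' * (?M1 s' - ?M2 s')\<bar> \<le> p s a s' * ?d"
      by (simp add: abs_mult mult_left_mono md)
  qed
  also have "\<dots> = ?d" using kernel by (simp add: is_kernel_def sum_distrib_right[symmetric])
  finally have "\<bar>(\<Sum>s'\<in>UNIV. p s a s' * ?M1 s') - (\<Sum>s'\<in>UNIV. p s a s' * ?M2 s')\<bar> \<le> ?d" .
  then have "\<gamma> * \<bar>(\<Sum>s'\<in>UNIV. p s a s' * ?M1 s') - (\<Sum>s'\<in>UNIV. p s a s' * ?M2 s')\<bar> \<le> \<gamma> * ?d"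
    using g by (rule mult_left_mono)
  then show ?thesis using g unfolding x Hop_def
    by (simp add: abs_mult right_diff_distrib[symmetric])
qed

lemma Hop_bd:
  assumes kernel: "is_kernel p" and g: "0 \<le> \<gamma>" and reward: "\<forall>s a. \<bar>R s a\<bar> \<le> 1"
  shows "\<bar>Hop p R \<gamma> Q x\<bar> \<le> 1 + \<gamma> * supnorm Q"
proof -
  have "\<bar>Hop p R \<gamma> Q x - Hop p R \<gamma> (\<lambda>_. 0) x\<bar> \<le> \<gamma> * supnorm (\<lambda>x. Q x - 0)"
    by (rule Hop_lip[OF kernel g])
  moreover have "\<bar>Hop p R \<gamma> (\<lambda>_. 0) x\<bar> \<le> 1"
    using reward by (cases x) (simp add: Hop_def)
  ultimately show ?thesis by simp
qed

lemma Hop_fix_unique: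
  assumes kernel: "is_kernel p" and g: "0 \<le> \<gamma>" "\<gamma> < 1"
    and h1: "Hop p R \<gamma> Q1 = Q1" and h2: "Hop p R \<gamma> Q2 = Q2"
  shows "Q1 = Q2"
proof -
  let ?d = "supnorm (\<lambda>x. Q1 x - Q2 x)"
  have "?d \<le> \<gamma> * ?d"
    by (rule sup_le) (metis Hop_lip[OF kernel g(1)] h1 h2)
  then have "?d \<le> 0" using g sup_nn[of "\<lambda>x. Q1 x - Q2 x"]
    by (metis mult_le_cancel_right1 not_le order_le_less_trans)
  then have "\<bar>Q1 x - Q2 x\<bar> \<le> 0" for x using sup_ge[of "\<lambda>x. Q1 x - Q2 x" x] by simp
  then show ?thesis by fastforce
qed


lemma Hop_fix_exists:
  assumes kernel: "is_kernel p" and g: "0 \<le> \<gamma>" "\<gamma> < 1"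
  shows "\<exists>Q. Hop p R \<gamma> Q = Q"
proof -
  define H where "H = Hop p R \<gamma>"
  define Q where "Q = (\<lambda>n. (H ^^ n) (\<lambda>_. 0))"
  have QS: "Q (Suc n) = H (Q n)" for n by (simp add: Q_def)
  define d0 where "d0 = supnorm (\<lambda>x. Q 1 x - Q 0 x)"
  have dn: "supnorm (\<lambda>x. Q (Suc n) x - Q n x) \<le> \<gamma> ^ n * d0" for n
  proof (induction n)
    case 0 then show ?case by (simp add: d0_def)
  next
    case (Suc n)
    have "supnorm (\<lambda>x. Q (Suc (Suc n)) x - Q (Suc n) x) \<le> \<gamma> * supnorm (\<lambda>x. Q (Suc n) x - Q n x)"
      by (rule sup_le) (simp only: QS H_def, rule Hop_lip[OF kernel g(1)])
    also have "\<dots> \<le> \<gamma> * (\<gamma> ^ n * d0)" using Suc g(1) by (rule mult_left_mono)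
    finally show ?case by simp
  qed
  define L where "L = (\<lambda>x. Q 0 x + (\<Sum>k. Q (Suc k) x - Q k x))"
  have summ: "summable (\<lambda>k. Q (Suc k) x - Q k x)" for x
  proof (rule summable_comparison_test')
    show "summable (\<lambda>k. d0 * \<gamma> ^ k)" using g by (simp add: summable_geometric)
    fix k
    show "norm (Q (Suc k) x - Q k x) \<le> d0 * \<gamma> ^ k"
      using sup_ge[of "\<lambda>x. Q (Suc k) x - Q k x" x] dn[of k] by (simp add: mult.commute)
  qed
  have conv: "(\<lambda>n. Q n x) \<longlonglongrightarrow> L x" for x
  proof -
    have "(\<lambda>n. \<Sum>k<n. Q (Suc k) x - Q k x) \<longlonglongrightarrow> (\<Sum>k. Q (Suc k) x - Q k x)"
      using summ summable_LIMSEQ by blast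
    then have "(\<lambda>n. Q 0 x + (\<Sum>k<n. Q (Suc k) x - Q k x)) \<longlonglongrightarrow> L x"
      unfolding L_def by (intro tendsto_intros)
    moreover have "Q 0 x + (\<Sum>k<n. Q (Suc k) x - Q k x) = Q n x" for n
      using sum_lessThan_telescope[of "\<lambda>k. Q k x" n] by simp
    ultimately show ?thesis by simp
  qed
  have S0: "(\<lambda>n. \<Sum>y\<in>UNIV. \<bar>Q n y - L y\<bar>) \<longlonglongrightarrow> 0"
  proof -
    have T: "(\<lambda>n. \<bar>Q n y - L y\<bar>) \<longlonglongrightarrow> 0" if "y \<in> UNIV" for y
      by (rule tendsto_rabs_zero, rule LIM_zero, rule conv)
    then show ?thesis by (rule tendsto_null_sum)
  qed
  have "H L = L"
  proof
    fix x
    have "(\<lambda>n. H (Q n) x - H L x) \<longlonglongrightarrow> 0"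
    proof (rule Lim_null_comparison)
      show "(\<lambda>n. \<gamma> * (\<Sum>y\<in>UNIV. \<bar>Q n y - L y\<bar>)) \<longlonglongrightarrow> 0"
        using tendsto_mult_right_zero[OF S0] by simp
      show "\<forall>\<^sub>F n in sequentially. norm (H (Q n) x - H L x) \<le> \<gamma> * (\<Sum>y\<in>UNIV. \<bar>Q n y - L y\<bar>)"
      proof (rule always_eventually, rule allI)
        fix n
        have "norm (H (Q n) x - H L x) \<le> \<gamma> * supnorm (\<lambda>y. Q n y - L y)"
          unfolding H_def real_norm_def by (rule Hop_lip[OF kernel g(1)])
        also have "\<dots> \<le> \<gamma> * (\<Sum>y\<in>UNIV. \<bar>Q n y - L y\<bar>)"
          by (rule mult_left_mono[OF sup_le_sum g(1)])
        finally show "norm (H (Q n) x - H L x) \<le> \<gamma> * (\<Sum>y\<in>UNIV. \<bar>Q n y - L y\<bar>)" .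
      qed
    qed
    then have "(\<lambda>n. Q (Suc n) x) \<longlonglongrightarrow> H L x" unfolding QS by (rule LIM_zero_cancel)
    moreover have "(\<lambda>n. Q (Suc n) x) \<longlonglongrightarrow> L x" using conv by (rule LIMSEQ_Suc)
    ultimately show "H L x = L x" by (rule LIMSEQ_unique)
  qed
  then show ?thesis unfolding H_def by blast
qed


lemma Ppi_pos_iff:
  assumes kernel: "is_kernel p" and pos: "\<forall>s a. 0 < \<pi> s a"
  shows "0 < Ppi p \<pi> x y \<longleftrightarrow> (\<exists>a. 0 < p x a y)"
proof
  assume "0 < Ppi p \<pi> x y"
  then show "\<exists>a. 0 < p x a y" unfolding Ppi_def
    by (metis (no_types, lifting) kernel is_kernel_def less_eq_real_def mult_zero_left sum.neutral)
next
  assume "\<exists>a. 0 < p x a y"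
  then obtain a where a: "0 < p x a y" by blast
  show "0 < Ppi p \<pi> x y" unfolding Ppi_def
  proof (rule sum_pos2[of UNIV a])
    show "0 < p x a y * \<pi> x a" using a pos by simp
    show "\<And>i. i \<in> UNIV \<Longrightarrow> 0 \<le> p x i y * \<pi> x i"
      using kernel pos by (simp add: is_kernel_def less_imp_le)
  qed auto
qed

lemma Ppi_nn:
  assumes kernel: "is_kernel p" and pol: "is_policy \<pi>"
  shows "0 \<le> Ppi p \<pi> s s'"
  using kernel pol unfolding Ppi_def is_kernel_def is_policy_def by (simp add: sum_nonneg)

lemma Ppi_rows:
  assumes kernel: "is_kernel p" and pol: "is_policy \<pi>"
  shows "(\<Sum>s'\<in>UNIV. Ppi p \<pi> s s') = 1"
proof -
  have "(\<Sum>s'\<in>UNIV. Ppi p \<pi> s s') = (\<Sum>a\<in>UNIV. \<pi> s a * (\<Sum>s'\<in>UNIV. p s a s'))"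
    unfolding Ppi_def by (subst sum.swap) (simp add: sum_distrib_left mult.commute)
  also have "\<dots> = 1" using kernel pol by (simp add: is_kernel_def is_policy_def)
  finally show ?thesis .
qed

lemma mu_stat:
  assumes kernel: "is_kernel p"
    and explore: "\<exists>\<pi>b. is_policy \<pi>b \<and> (\<forall>s a. 0 < \<pi>b s a) \<and> irreducible (Ppi p \<pi>b)"
    and pi: "\<pi> \<in> PiSet"
  shows "stationary (Ppi p \<pi>) (mu p \<pi>)" "irreducible (Ppi p \<pi>)"
proof -
  obtain \<pi>b where b: "is_policy \<pi>b" "\<forall>s a. 0 < \<pi>b s a" "irreducible (Ppi p \<pi>b)"
    using explore by blast
  have pol: "is_policy \<pi>" and pos: "\<forall>s a. 0 < \<pi> s a" using pi by (auto simp: PiSet_def)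
  have "{(x, y). 0 < Ppi p \<pi> x y} = {(x, y). 0 < Ppi p \<pi>b x y}"
    using Ppi_pos_iff[OF kernel pos] Ppi_pos_iff[OF kernel b(2)] by auto
  then show irr: "irreducible (Ppi p \<pi>)" using b(3) by (simp add: irreducible_def)
  have ex: "\<exists>\<mu>. stationary (Ppi p \<pi>) \<mu>"
    by (rule stat_exists) (auto simp: Ppi_nn[OF kernel pol] Ppi_rows[OF kernel pol])
  have "\<exists>!\<mu>. stationary (Ppi p \<pi>) \<mu>"
    using ex stat_unique[OF Ppi_nn[OF kernel pol] irr] by blast
  then show "stationary (Ppi p \<pi>) (mu p \<pi>)" unfolding mu_def by (rule theI')
qed

lemma mubar_props:
  assumes kernel: "is_kernel p"
    and explore: "\<exists>\<pi>b. is_policy \<pi>b \<and> (\<forall>s a. 0 < \<pi>b s a) \<and> irreducible (Ppi p \<pi>b)"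
    and pi: "\<pi> \<in> PiSet"
  shows "0 < mubar p \<pi> x" "mubar p \<pi> x \<le> 1" "(\<Sum>y\<in>UNIV. mubar p \<pi> y) = 1"
proof -
  have pol: "is_policy \<pi>" and pos: "\<forall>s a. 0 < \<pi> s a" using pi by (auto simp: PiSet_def)
  note st = mu_stat[OF kernel explore pi]
  have mp: "0 < mu p \<pi> s" for s by (rule stat_pos[OF Ppi_nn[OF kernel pol] st(2) st(1)])
  have ms: "(\<Sum>s\<in>UNIV. mu p \<pi> s) = 1" by (rule stat_sum[OF st(1)])
  have m1: "mu p \<pi> s \<le> 1" for s
    using member_le_sum[of s UNIV "mu p \<pi>"] mp ms by (simp add: less_imp_le)
  have p1: "\<pi> s a \<le> 1" for s a
    using member_le_sum[of a UNIV "\<pi> s"] pol by (simp add: is_policy_def)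
  obtain s a where x: "x = (s, a)" by fastforce
  show "0 < mubar p \<pi> x" using mp pos by (simp add: x mubar_def)
  show "mubar p \<pi> x \<le> 1" using mp pos m1 p1
    by (simp add: x mubar_def mult_le_one less_imp_le)
  have "(\<Sum>y\<in>UNIV. mubar p \<pi> y) = (\<Sum>s\<in>UNIV. \<Sum>a\<in>UNIV. mu p \<pi> s * \<pi> s a)"
    unfolding mubar_def UNIV_Times_UNIV[symmetric] sum.cartesian_product by simp
  also have "\<dots> = (\<Sum>s\<in>UNIV. mu p \<pi> s)"
    using pol by (simp add: sum_distrib_left[symmetric] is_policy_def)
  finally show "(\<Sum>y\<in>UNIV. mubar p \<pi> y) = 1" using ms by simp
qed

lemma Fop_eq: "Fop p R \<gamma> Q y x = (if y = x then 1 else 0) * (Hop p R \<gamma> Q x - Q x) + Q x"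
  by (cases x) (simp add: Fop_def Hop_def)

lemma Fbar_eq:
  assumes "(\<Sum>y\<in>UNIV. mubar p \<pi> y) = 1"
  shows "Fbar p R \<gamma> Q \<pi> = (\<lambda>x. (1 - mubar p \<pi> x) * Q x + mubar p \<pi> x * Hop p R \<gamma> Q x)"
proof
  fix x
  have "Fbar p R \<gamma> Q \<pi> x = (\<Sum>y\<in>UNIV. (if y = x then mubar p \<pi> y * (Hop p R \<gamma> Q x - Q x) else 0)
        + mubar p \<pi> y * Q x)"
    unfolding Fbar_def Fop_eq by (intro sum.cong) (auto simp: algebra_simps)
  also have "\<dots> = mubar p \<pi> x * (Hop p R \<gamma> Q x - Q x) + (\<Sum>y\<in>UNIV. mubar p \<pi> y) * Q x"
    by (simp add: sum.distrib sum_distrib_right)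
  also have "\<dots> = (1 - mubar p \<pi> x) * Q x + mubar p \<pi> x * Hop p R \<gamma> Q x"
    using assms by (simp add: algebra_simps)
  finally show "Fbar p R \<gamma> Q \<pi> x = (1 - mubar p \<pi> x) * Q x + mubar p \<pi> x * Hop p R \<gamma> Q x" .
qed


lemma abs_tri3: "\<bar>(a::real) + b + c\<bar> \<le> \<bar>a\<bar> + \<bar>b\<bar> + \<bar>c\<bar>" by linarith

theorem lemma2:
  fixes p :: "'s::finite \<Rightarrow> 'a::finite \<Rightarrow> 's \<Rightarrow> real"
    and R :: "'s \<Rightarrow> 'a \<Rightarrow> real"
    and \<gamma> :: real
  assumes kernel: "is_kernel p"
    and reward: "\<forall>s a. \<bar>R s a\<bar> \<le> 1"
    and gamma: "0 < \<gamma>" "\<gamma> < 1"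
    and explore: "\<exists>\<pi>b. is_policy \<pi>b \<and> (\<forall>s a. 0 < \<pi>b s a) \<and> irreducible (Ppi p \<pi>b)"
  shows
    "(\<forall>\<pi>\<in>PiSet. \<forall>Q.
        Fbar p R \<gamma> Q \<pi> = (\<lambda>x. (1 - mubar p \<pi> x) * Q x + mubar p \<pi> x * Hop p R \<gamma> Q x))
     \<and> (\<forall>\<pi>\<in>PiSet. 0 < (MIN x\<in>UNIV. mubar p \<pi> x) \<and>
        (\<forall>Q1 Q2.
          supnorm (\<lambda>x. Fbar p R \<gamma> Q1 \<pi> x - Fbar p R \<gamma> Q2 \<pi> x)
            \<le> (1 - (MIN x\<in>UNIV. mubar p \<pi> x) * (1 - \<gamma>)) * supnorm (\<lambda>x. Q1 x - Q2 x)
          \<and> supnorm (Fbar p R \<gamma> Q1 \<pi>) \<le> supnorm Q1 + 1))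
     \<and> (\<forall>\<pi>\<in>PiSet. \<forall>Q. Fbar p R \<gamma> Q \<pi> = Q \<longleftrightarrow> Q = Qstar p R \<gamma>)
     \<and> (\<forall>Q1 Q2 \<pi>1 \<pi>2. supnorm Q1 \<le> 1 / (1 - \<gamma>) \<longrightarrow> supnorm Q2 \<le> 1 / (1 - \<gamma>)
          \<longrightarrow> \<pi>1 \<in> PiSet \<longrightarrow> \<pi>2 \<in> PiSet \<longrightarrow>
          supnorm (\<lambda>x. Fbar p R \<gamma> Q1 \<pi>1 x - Fbar p R \<gamma> Q2 \<pi>2 x)
            \<le> 3 * supnorm (\<lambda>x. Q1 x - Q2 x)
              + 2 / (1 - \<gamma>) * supnorm (\<lambda>x. mubar p \<pi>1 x - mubar p \<pi>2 x))"
proof -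
  have g0: "0 \<le> \<gamma>" using gamma by simp
  note mb = mubar_props[OF kernel explore]
  note FE = Fbar_eq[OF mb(3)]
  note HL = Hop_lip[OF kernel g0]
  note HB = Hop_bd[OF kernel g0 reward]
  have P1: "\<forall>\<pi>\<in>PiSet. \<forall>Q.
        Fbar p R \<gamma> Q \<pi> = (\<lambda>x. (1 - mubar p \<pi> x) * Q x + mubar p \<pi> x * Hop p R \<gamma> Q x)"
    using FE by blast
  have P2: "\<forall>\<pi>\<in>PiSet. 0 < (MIN x\<in>UNIV. mubar p \<pi> x) \<and>
        (\<forall>Q1 Q2.
          supnorm (\<lambda>x. Fbar p R \<gamma> Q1 \<pi> x - Fbar p R \<gamma> Q2 \<pi> x)
            \<le> (1 - (MIN x\<in>UNIV. mubar p \<pi> x) * (1 - \<gamma>)) * supnorm (\<lambda>x. Q1 x - Q2 x)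
          \<and> supnorm (Fbar p R \<gamma> Q1 \<pi>) \<le> supnorm Q1 + 1)"
  proof (intro ballI conjI allI)
    fix \<pi> :: "'s \<Rightarrow> 'a \<Rightarrow> real" assume pi: "\<pi> \<in> PiSet"
    define mm where "mm = (MIN x\<in>UNIV. mubar p \<pi> x)"
    have mmin: "mm \<le> mubar p \<pi> x" for x unfolding mm_def by (rule Min_le) auto
    obtain x0 where "mm = mubar p \<pi> x0"
    proof -
      have "mm \<in> mubar p \<pi> ` UNIV" unfolding mm_def by (rule Min_in) auto
      then show ?thesis using that by blast
    qed
    then show "0 < (MIN x\<in>UNIV. mubar p \<pi> x)" using mb(1)[OF pi] by (simp add: mm_def)
    fix Q1 Q2 :: "'s \<times> 'a \<Rightarrow> real"
    let ?d = "supnorm (\<lambda>x. Q1 x - Q2 x)"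
    show "supnorm (\<lambda>x. Fbar p R \<gamma> Q1 \<pi> x - Fbar p R \<gamma> Q2 \<pi> x)
            \<le> (1 - (MIN x\<in>UNIV. mubar p \<pi> x) * (1 - \<gamma>)) * ?d"
    proof (rule sup_le)
      fix x
      let ?m = "mubar p \<pi> x"
      have m0: "0 \<le> ?m" "?m \<le> 1" using mb(1,2)[OF pi, of x] by auto
      have e: "Fbar p R \<gamma> Q1 \<pi> x - Fbar p R \<gamma> Q2 \<pi> x
          = (1 - ?m) * (Q1 x - Q2 x) + ?m * (Hop p R \<gamma> Q1 x - Hop p R \<gamma> Q2 x)"
        by (simp add: FE[OF pi] algebra_simps)
      have a1: "\<bar>(1 - ?m) * (Q1 x - Q2 x)\<bar> \<le> (1 - ?m) * ?d"
        using m0 sup_ge[of "\<lambda>x. Q1 x - Q2 x" x] by (simp add: abs_mult mult_left_mono)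
      have a2: "\<bar>?m * (Hop p R \<gamma> Q1 x - Hop p R \<gamma> Q2 x)\<bar> \<le> ?m * (\<gamma> * ?d)"
        using m0 HL[of R Q1 x Q2] by (simp add: abs_mult mult_left_mono)
      have a3: "mm * ((1 - \<gamma>) * ?d) \<le> ?m * ((1 - \<gamma>) * ?d)"
        using mmin[of x] gamma sup_nn[of "\<lambda>x. Q1 x - Q2 x"] by (intro mult_right_mono) auto
      have "\<bar>Fbar p R \<gamma> Q1 \<pi> x - Fbar p R \<gamma> Q2 \<pi> x\<bar> \<le> (1 - ?m) * ?d + ?m * (\<gamma> * ?d)"
        unfolding e using a1 a2 abs_triangle_ineq order_trans add_mono by fastforce
      also have "\<dots> = ?d - ?m * ((1 - \<gamma>) * ?d)" by (simp add: algebra_simps)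
      also have "\<dots> \<le> ?d - mm * ((1 - \<gamma>) * ?d)" using a3 by simp
      also have "\<dots> = (1 - mm * (1 - \<gamma>)) * ?d" by (simp add: algebra_simps)
      finally show "\<bar>Fbar p R \<gamma> Q1 \<pi> x - Fbar p R \<gamma> Q2 \<pi> x\<bar>
          \<le> (1 - (MIN x\<in>UNIV. mubar p \<pi> x) * (1 - \<gamma>)) * ?d" by (simp add: mm_def)
    qed
    show "supnorm (Fbar p R \<gamma> Q1 \<pi>) \<le> supnorm Q1 + 1"
    proof (rule sup_le)
      fix x
      let ?m = "mubar p \<pi> x"
      let ?N = "supnorm Q1"
      have m0: "0 \<le> ?m" "?m \<le> 1" using mb(1,2)[OF pi, of x] by auto
      have N0: "0 \<le> ?N" by (rule sup_nn)
      have a1: "\<bar>(1 - ?m) * Q1 x\<bar> \<le> (1 - ?m) * ?N"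
        using m0 sup_ge[of Q1 x] by (simp add: abs_mult mult_left_mono)
      have a2: "\<bar>?m * Hop p R \<gamma> Q1 x\<bar> \<le> ?m * (1 + \<gamma> * ?N)"
        using m0 HB[of Q1 x] by (simp add: abs_mult mult_left_mono)
      have a3: "?m * (\<gamma> * ?N) \<le> ?m * ?N"
        using m0 N0 gamma by (intro mult_left_mono) (auto simp: mult_left_le_one_le)
      have "\<bar>Fbar p R \<gamma> Q1 \<pi> x\<bar> \<le> (1 - ?m) * ?N + ?m * (1 + \<gamma> * ?N)"
        unfolding FE[OF pi] using a1 a2 abs_triangle_ineq order_trans add_mono by fastforce
      also have "\<dots> = ?N - ?m * ?N + ?m + ?m * (\<gamma> * ?N)" by (simp add: algebra_simps)
      also have "\<dots> \<le> ?N + 1" using a3 m0 by simp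
      finally show "\<bar>Fbar p R \<gamma> Q1 \<pi> x\<bar> \<le> ?N + 1" .
    qed
  qed
  have ex1: "\<exists>!Q. Hop p R \<gamma> Q = Q"
    using Hop_fix_exists[OF kernel g0 gamma(2)] Hop_fix_unique[OF kernel g0 gamma(2)] by blast
  have QS: "Hop p R \<gamma> Q = Q \<longleftrightarrow> Q = Qstar p R \<gamma>" for Q
  proof -
    have "Hop p R \<gamma> (Qstar p R \<gamma>) = Qstar p R \<gamma>" unfolding Qstar_def by (rule theI'[OF ex1])
    then show ?thesis using ex1 by blast
  qed
  have P3: "\<forall>\<pi>\<in>PiSet. \<forall>Q. Fbar p R \<gamma> Q \<pi> = Q \<longleftrightarrow> Q = Qstar p R \<gamma>"
  proof (intro ballI allI)
    fix \<pi> :: "'s \<Rightarrow> 'a \<Rightarrow> real" and Q assume pi: "\<pi> \<in> PiSet"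
    have "Fbar p R \<gamma> Q \<pi> = Q \<longleftrightarrow> (\<forall>x. mubar p \<pi> x * (Hop p R \<gamma> Q x - Q x) = 0)"
      unfolding FE[OF pi] fun_eq_iff by (simp add: algebra_simps)
    also have "\<dots> \<longleftrightarrow> Hop p R \<gamma> Q = Q"
      using mb(1)[OF pi] unfolding fun_eq_iff by (metis less_irrefl mult_eq_0_iff right_minus_eq)
    finally show "Fbar p R \<gamma> Q \<pi> = Q \<longleftrightarrow> Q = Qstar p R \<gamma>" using QS by simp
  qed
  have P4: "\<forall>Q1 Q2 \<pi>1 \<pi>2. supnorm Q1 \<le> 1 / (1 - \<gamma>) \<longrightarrow> supnorm Q2 \<le> 1 / (1 - \<gamma>)
          \<longrightarrow> \<pi>1 \<in> PiSet \<longrightarrow> \<pi>2 \<in> PiSet \<longrightarrow>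
          supnorm (\<lambda>x. Fbar p R \<gamma> Q1 \<pi>1 x - Fbar p R \<gamma> Q2 \<pi>2 x)
            \<le> 3 * supnorm (\<lambda>x. Q1 x - Q2 x)
              + 2 / (1 - \<gamma>) * supnorm (\<lambda>x. mubar p \<pi>1 x - mubar p \<pi>2 x)"
  proof (intro allI impI)
    fix Q1 Q2 :: "'s \<times> 'a \<Rightarrow> real" and \<pi>1 \<pi>2 :: "'s \<Rightarrow> 'a \<Rightarrow> real"
    assume n1: "supnorm Q1 \<le> 1 / (1 - \<gamma>)" and n2: "supnorm Q2 \<le> 1 / (1 - \<gamma>)"
      and pi1: "\<pi>1 \<in> PiSet" and pi2: "\<pi>2 \<in> PiSet"
    let ?d = "supnorm (\<lambda>x. Q1 x - Q2 x)"
    let ?e = "supnorm (\<lambda>x. mubar p \<pi>1 x - mubar p \<pi>2 x)"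
    let ?B = "1 / (1 - \<gamma>)"
    show "supnorm (\<lambda>x. Fbar p R \<gamma> Q1 \<pi>1 x - Fbar p R \<gamma> Q2 \<pi>2 x) \<le> 3 * ?d + 2 / (1 - \<gamma>) * ?e"
    proof (rule sup_le)
      fix x
      let ?m1 = "mubar p \<pi>1 x" and ?m2 = "mubar p \<pi>2 x"
      let ?H1 = "Hop p R \<gamma> Q1 x" and ?H2 = "Hop p R \<gamma> Q2 x"
      have m0: "0 \<le> ?m1" "?m1 \<le> 1" using mb(1,2)[OF pi1, of x] by auto
      have d0: "0 \<le> ?d" by (rule sup_nn)
      have e: "Fbar p R \<gamma> Q1 \<pi>1 x - Fbar p R \<gamma> Q2 \<pi>2 x
          = (Q1 x - Q2 x) + ?m1 * ((?H1 - ?H2) - (Q1 x - Q2 x)) + (?m1 - ?m2) * (?H2 - Q2 x)"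
        by (simp add: FE[OF pi1] FE[OF pi2] algebra_simps)
      have b1: "\<bar>Q1 x - Q2 x\<bar> \<le> ?d" by (rule sup_ge[of "\<lambda>x. Q1 x - Q2 x", simplified])
      have b2': "\<bar>(?H1 - ?H2) - (Q1 x - Q2 x)\<bar> \<le> \<gamma> * ?d + ?d"
        using HL[of R Q1 x Q2] b1 by linarith
      have "\<gamma> * ?d \<le> ?d" using d0 gamma by (simp add: mult_left_le_one_le)
      then have b2'': "\<bar>(?H1 - ?H2) - (Q1 x - Q2 x)\<bar> \<le> 2 * ?d" using b2' by linarith
      have b2: "\<bar>?m1 * ((?H1 - ?H2) - (Q1 x - Q2 x))\<bar> \<le> 2 * ?d"
      proof -
        have "\<bar>?m1 * ((?H1 - ?H2) - (Q1 x - Q2 x))\<bar> \<le> 1 * (2 * ?d)"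
          unfolding abs_mult using m0 b2'' d0 by (intro mult_mono) auto
        then show ?thesis by simp
      qed
      have hq: "\<bar>?H2 - Q2 x\<bar> \<le> 2 / (1 - \<gamma>)"
      proof -
        have q2: "\<bar>Q2 x\<bar> \<le> ?B" using sup_ge[of Q2 x] n2 by linarith
        have "\<gamma> * supnorm Q2 \<le> \<gamma> * ?B" using n2 g0 by (rule mult_left_mono)
        then have "\<bar>?H2 - Q2 x\<bar> \<le> 1 + \<gamma> * ?B + ?B" using HB[of Q2 x] q2 by linarith
        also have "\<dots> = 2 / (1 - \<gamma>)" using gamma by (simp add: field_simps)
        finally show ?thesis .
      qed
      have b3: "\<bar>(?m1 - ?m2) * (?H2 - Q2 x)\<bar> \<le> ?e * (2 / (1 - \<gamma>))"
      proof -
        have "\<bar>?m1 - ?m2\<bar> \<le> ?e" using sup_ge[of "\<lambda>x. mubar p \<pi>1 x - mubar p \<pi>2 x" x] by simp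
        then show ?thesis unfolding abs_mult using hq sup_nn[of "\<lambda>x. mubar p \<pi>1 x - mubar p \<pi>2 x"]
          by (intro mult_mono) auto
      qed
      have "\<bar>Fbar p R \<gamma> Q1 \<pi>1 x - Fbar p R \<gamma> Q2 \<pi>2 x\<bar> \<le> ?d + 2 * ?d + ?e * (2 / (1 - \<gamma>))"
        unfolding e using abs_tri3[of "Q1 x - Q2 x" "?m1 * ((?H1 - ?H2) - (Q1 x - Q2 x))"
            "(?m1 - ?m2) * (?H2 - Q2 x)"] b1 b2 b3 by linarith
      then show "\<bar>Fbar p R \<gamma> Q1 \<pi>1 x - Fbar p R \<gamma> Q2 \<pi>2 x\<bar> \<le> 3 * ?d + 2 / (1 - \<gamma>) * ?e"
        by (simp add: mult.commute)
    qed
  qed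
  show ?thesis using P1 P2 P3 P4 by blast
qed

end
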